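(* Let $\omega\in S_n$. If $M_\omega$ contains a $C_4$-parallelogram-pattern poset, then $M_\omega$ contains a parallelogram-pattern poset.
   Context: Permutations $\omega\in S_n$ are written in one-line notation. Let ${\rm Inv}(\omega)=\{(i,j): 1\le i<j\le n,\ \omega(i)>\omega(j)\}$, $c_i(\omega)=\#\{j: i<j\le n,\ \omega(i)>\omega(j)\}$, and for $i<j$, $c_{i,j}(\omega)=\#\{k: i<k<j,\ \omega(i)>\omega(k)\}$; $[m]=\{1,\dots,m\}$. For $i$ with $c_i(\omega)>0$ and $x\in[c_i(\omega)]$, $m_{i,x}(\omega)\in\mathbb{N}^n$ has $j$-th coordinate $0$ if $j<i$; $x$ if $j=i$; $0$ if $j>i$ and $(i,j)\in{\rm Inv}(\omega)$; $\max\{0,x-c_{i,j}(\omega)\}$ if $j>i$ and $(i,j)\notin{\rm Inv}(\omega)$. $M_\omega$ is the set of all such $m_{i,x}(\omega)$, ordered by the product order on $\mathbb{N}^n$. For $1\le i<j\le n$, $b<a$ in $[c_i(\omega)]$ and $c<d$ in $[c_j(\omega)]$ with $a+c=b+d$, the set $\{m_{i,a}(\omega),m_{i,b}(\omega),m_{j,c}(\omega),m_{j,d}(\omega)\}$ is a parallelogram-pattern poset if $m_{i,a}(\omega)>m_{j,d}(\omega)$, $m_{i,b}(\omega)>m_{j,c}(\omega)$, and $m_{i,b}(\omega)$, $m_{j,d}(\omega)$ are incomparable; it is a $C_4$-parallelogram-pattern poset if $m_{i,a}(\omega)>m_{j,d}(\omega)$, $m_{i,b}(\omega)>m_{j,c}(\omega)$,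 and $m_{i,b}(\omega)$, $m_{j,d}(\omega)$ are comparable. *)

theory Defs
  imports "HOL-Combinatorics.Permutations"
begin

(* Permutations of [n] = {1..n} are functions w :: nat => nat with w permutes {1..n};
   w i is the i-th entry of the one-line notation.  Vectors in N^n are functions
   nat => nat, of which only coordinates 1..n are relevant. *)

definition Inv :: "nat \<Rightarrow> (nat \<Rightarrow> nat) \<Rightarrow> (nat \<times> nat) set" where
  "Inv n w = {(i,j). 1 \<le> i \<and> i < j \<and> j \<le> n \<and> w i > w j}"

definition cc :: "nat \<Rightarrow> (nat \<Rightarrow> nat) \<Rightarrow> nat \<Rightarrow> nat" where
  "cc n w i = card {j. i < j \<and> j \<le> n \<and> w i > w j}"

definition cij :: "(nat \<Rightarrow> nat) \<Rightarrow> nat \<Rightarrow> nat \<Rightarrow> nat" where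
  "cij w i j = card {k. i < k \<and> k < j \<and> w i > w k}"

(* m_{i,x}(w); nat subtraction x - c equals max 0 (x - c) *)
definition mvec :: "nat \<Rightarrow> (nat \<Rightarrow> nat) \<Rightarrow> nat \<Rightarrow> nat \<Rightarrow> (nat \<Rightarrow> nat)" where
  "mvec n w i x = (\<lambda>j. if j < i then 0
                        else if j = i then x
                        else if (i,j) \<in> Inv n w then 0
                        else x - cij w i j)"

definition vle :: "nat \<Rightarrow> (nat \<Rightarrow> nat) \<Rightarrow> (nat \<Rightarrow> nat) \<Rightarrow> bool" where
  "vle n u v = (\<forall>j\<in>{1..n}. u j \<le> v j)"

definition vlt :: "nat \<Rightarrow> (nat \<Rightarrow> nat) \<Rightarrow> (nat \<Rightarrow> nat) \<Rightarrow> bool" where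
  "vlt n u v = (vle n u v \<and> \<not> vle n v u)"

definition comparable :: "nat \<Rightarrow> (nat \<Rightarrow> nat) \<Rightarrow> (nat \<Rightarrow> nat) \<Rightarrow> bool" where
  "comparable n u v = (vle n u v \<or> vle n v u)"

definition pattern_data :: "nat \<Rightarrow> (nat \<Rightarrow> nat) \<Rightarrow> nat \<Rightarrow> nat \<Rightarrow> nat \<Rightarrow> nat \<Rightarrow> nat \<Rightarrow> nat \<Rightarrow> bool" where
  "pattern_data n w i j a b c d =
     (1 \<le> i \<and> i < j \<and> j \<le> n \<and>
      1 \<le> b \<and> b < a \<and> a \<le> cc n w i \<and>
      1 \<le> c \<and> c < d \<and> d \<le> cc n w j \<and>
      a + c = b + d \<and>
      vlt n (mvec n w j d) (mvec n w i a) \<and>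
      vlt n (mvec n w j c) (mvec n w i b))"

definition parallelogram_pattern :: "nat \<Rightarrow> (nat \<Rightarrow> nat) \<Rightarrow> nat \<Rightarrow> nat \<Rightarrow> nat \<Rightarrow> nat \<Rightarrow> nat \<Rightarrow> nat \<Rightarrow> bool" where
  "parallelogram_pattern n w i j a b c d =
     (pattern_data n w i j a b c d \<and> \<not> comparable n (mvec n w i b) (mvec n w j d))"

definition C4_parallelogram_pattern :: "nat \<Rightarrow> (nat \<Rightarrow> nat) \<Rightarrow> nat \<Rightarrow> nat \<Rightarrow> nat \<Rightarrow> nat \<Rightarrow> nat \<Rightarrow> nat \<Rightarrow> bool" where
  "C4_parallelogram_pattern n w i j a b c d =
     (pattern_data n w i j a b c d \<and> comparable n (mvec n w i b) (mvec n w j d))"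

end

theory Submission
  imports Defs
begin

lemma cij_sub:
  assumes "i < j" "j < l" "w i \<le> w j" "w j \<le> w l"
  shows "cij w i l \<le> cij w i j + cij w j l"
proof -
  have "{k. i < k \<and> k < l \<and> w i > w k} \<subseteq>
        {k. i < k \<and> k < j \<and> w i > w k} \<union> {k. j < k \<and> k < l \<and> w j > w k}"
  proof
    fix k assume "k \<in> {k. i < k \<and> k < l \<and> w i > w k}"
    hence k: "i < k" "k < l" "w k < w i" by auto
    show "k \<in> {k. i < k \<and> k < j \<and> w i > w k} \<union> {k. j < k \<and> k < l \<and> w j > w k}"
    proof (cases "k < j")
      case True thus ?thesis using k by simp
    next
      case False
      have "k \<noteq> j" using k assms(3) by auto
      hence "j < k" using False by simp
      moreover have "w k < w j" using k assms(3) by simp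
      ultimately show ?thesis using k by simp
    qed
  qed
  hence "cij w i l \<le> card ({k. i < k \<and> k < j \<and> w i > w k} \<union> {k. j < k \<and> k < l \<and> w j > w k})"
    unfolding cij_def by (intro card_mono) auto
  also have "\<dots> \<le> cij w i j + cij w j l" unfolding cij_def by (rule card_Un_le)
  finally show ?thesis .
qed

lemma vle_key:
  assumes "i < j" "w i \<le> w j" "1 \<le> y" "y + cij w i j \<le> x"
  shows "vle n (mvec n w j y) (mvec n w i x)"
  unfolding vle_def
proof
  fix l assume l: "l \<in> {1..n}"
  show "mvec n w j y l \<le> mvec n w i x l"
  proof (cases "l < j")
    case True thus ?thesis by (simp add: mvec_def)
  next
    case False
    show ?thesis
    proof (cases "l = j")
      case True
      thus ?thesis using assms by (simp add: mvec_def Inv_def)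
    next
      case False2: False
      hence jl: "j < l" using False by simp
      show ?thesis
      proof (cases "(j,l) \<in> Inv n w")
        case True thus ?thesis using jl by (simp add: mvec_def)
      next
        case nI: False
        hence "w j \<le> w l" using jl l assms(1) by (auto simp: Inv_def)
        hence "(i,l) \<notin> Inv n w" using assms by (auto simp: Inv_def)
        moreover have "cij w i l \<le> cij w i j + cij w j l"
          using cij_sub[of i j l w] assms jl \<open>w j \<le> w l\<close> by simp
        ultimately have e1: "mvec n w i x l = x - cij w i l" and "cij w i l \<le> cij w i j + cij w j l"
          using jl assms(1) unfolding mvec_def by auto
        moreover have "mvec n w j y l = y - cij w j l" using nI jl unfolding mvec_def by auto
        ultimately show ?thesis using assms(4) by linarith
      qed
    qed
  qed
qed

theorem mainTheorem6:
  fixes n :: nat and w :: "nat \<Rightarrow> nat"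
  assumes "w permutes {1..n}"
    and "\<exists>i j a b c d. C4_parallelogram_pattern n w i j a b c d"
  shows "\<exists>i j a b c d. parallelogram_pattern n w i j a b c d"
proof -
  obtain i j a b c d where P: "C4_parallelogram_pattern n w i j a b c d"
    using assms(2) by blast
  have ij: "1 \<le> i" "i < j" "j \<le> n" "1 \<le> b" "b < a" "a \<le> cc n w i"
    "1 \<le> c" "c < d" "d \<le> cc n w j" "a + c = b + d"
    using P by (auto simp: C4_parallelogram_pattern_def pattern_data_def)
  have cmp: "comparable n (mvec n w i b) (mvec n w j d)"
    using P by (simp add: C4_parallelogram_pattern_def)
  have "\<not> vle n (mvec n w i b) (mvec n w j d)"
  proof
    assume "vle n (mvec n w i b) (mvec n w j d)"
    hence "mvec n w i b i \<le> mvec n w j d i" using ij unfolding vle_def by auto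
    thus False using ij by (simp add: mvec_def)
  qed
  hence V: "vle n (mvec n w j d) (mvec n w i b)" using cmp by (simp add: comparable_def)
  hence "mvec n w j d j \<le> mvec n w i b j" using ij unfolding vle_def by auto
  hence Vj: "d \<le> mvec n w i b j" by (simp add: mvec_def)
  have nI: "(i,j) \<notin> Inv n w" using Vj ij by (auto simp: mvec_def)
  hence wij: "w i \<le> w j" using ij by (auto simp: Inv_def)
  define C where "C = cij w i j"
  have dC: "d + C \<le> b" using Vj nI ij by (simp add: mvec_def C_def)
  have mi: "\<And>x. mvec n w i x i = x" by (simp add: mvec_def)
  have mj: "\<And>y. mvec n w j y i = 0" using ij by (simp add: mvec_def)
  have mij: "\<And>x. mvec n w i x j = x - C" using nI ij by (simp add: mvec_def C_def)
  have mjj: "\<And>y. mvec n w j y j = y" by (simp add: mvec_def)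
  have iin: "i \<in> {1..n}" "j \<in> {1..n}" using ij by auto
  have A: "1 \<le> i" "i < j" "j \<le> n" "1 \<le> C+1" "C+1 < C+2" "C+2 \<le> cc n w i"
    "(1::nat) \<le> 1" "(1::nat) < 2" "2 \<le> cc n w j" "C+2+1 = C+1+2"
    using ij dC by linarith+
  have "parallelogram_pattern n w i j (C+2) (C+1) 1 2"
    unfolding parallelogram_pattern_def pattern_data_def vlt_def comparable_def
  proof (intro conjI)
    show "vle n (mvec n w j 2) (mvec n w i (C + 2))"
      using vle_key[of i j w 2 "C+2"] ij wij by (simp add: C_def)
    show "vle n (mvec n w j 1) (mvec n w i (C + 1))"
      using vle_key[of i j w 1 "C+1"] ij wij by (simp add: C_def)
    show "\<not> vle n (mvec n w i (C + 2)) (mvec n w j 2)"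
      proof
        assume "vle n (mvec n w i (C + 2)) (mvec n w j 2)"
        hence "mvec n w i (C + 2) i \<le> mvec n w j 2 i" using iin unfolding vle_def by blast
        thus False using mi mj by simp
      qed
    show "\<not> vle n (mvec n w i (C + 1)) (mvec n w j 1)"
      proof
        assume "vle n (mvec n w i (C + 1)) (mvec n w j 1)"
        hence "mvec n w i (C + 1) i \<le> mvec n w j 1 i" using iin unfolding vle_def by blast
        thus False using mi mj by simp
      qed
    show "\<not> (vle n (mvec n w i (C + 1)) (mvec n w j 2) \<or> vle n (mvec n w j 2) (mvec n w i (C + 1)))"
    proof -
      have "\<not> vle n (mvec n w i (C + 1)) (mvec n w j 2)"
      proof
        assume "vle n (mvec n w i (C + 1)) (mvec n w j 2)"
        hence "mvec n w i (C + 1) i \<le> mvec n w j 2 i" using iin unfolding vle_def by blast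
        thus False using mi mj by simp
      qed
      moreover have "\<not> vle n (mvec n w j 2) (mvec n w i (C + 1))"
      proof
        assume "vle n (mvec n w j 2) (mvec n w i (C + 1))"
        hence "mvec n w j 2 j \<le> mvec n w i (C + 1) j" using iin unfolding vle_def by blast
        thus False using mij mjj by simp
      qed
      ultimately show ?thesis by blast
    qed
  qed (fact A)+
  thus ?thesis by (intro exI)
qed

end
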